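(* Let $R$ be a commutative semiring and $v:R\to M$ a surjective m-valuation with support $\mathfrak q$. Let $U(v):=\widehat{U^0(v)}$ and $\varphi_v:=\sigma_{U^0(v)}\circ\varphi_v^0:R\to U(v)$. Then $\varphi_v$ is a supervaluation covering $v$ and is an initial cover of $v$: for any supervaluation $\psi:R\to V$ covering $v$, there exists a unique semiring homomorphism $\alpha:U(v)\to V$ over $M$ with $\psi=\alpha\circ\varphi_v$.
   Context: A bipotent semiring $M$: commutative monoid with absorbing $0$, total order compatible with multiplication, $0$ least, $x+y=\max(x,y)$. m-valuation: multiplicative $v:R\to M$ with $v(0)=0$, $v(1)=1$, $v(a+b)\le\max(v(a),v(b))$. A supertropical monoid is a commutative monoid $U$ with absorbing $0$, idempotent $e$ with $ex=0\Rightarrow x=0$, and a total order on $eU$ making it a bipotent semiring; it is a (supertropical) semiring if the addition $x+y:=y$ ($ex<ey$), $x$ ($ex>ey$), $ex$ ($ex=ey$) is associative and distributive. An m-supervaluation is $\varphi:R\to U$ with $\varphi(0)=0$, $\varphi(1)=1$, multiplicative, $e\varphi(a+b)\le\max(e\varphi(a),e\varphi(b))$; a supervaluation is an m-supervaluation whose target is a supertropical semiring; it covers $v$ if $eU=M$ and $e\varphi=v$. "Over $M$" means restricting to the identity on $M$. $U^0(v)$: the set $(R\setminus\mathfrak q)\sqcup M$ with product $xy$ if $x,y,xy\in R\setminus\mathfrak q$; $0_M$ if $x,y\in R\setminus\mathfrak q$, $xy\in\mathfrak q$; $v(x)y$ if $x\in R\setminus\mathfrak q$, $y\in M$ (and symmetrically);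 the $M$-product on $M$; $e=1_M$, order of $M$ on $eU^0(v)=M$. $\varphi_v^0(a)=a$ for $a\notin\mathfrak q$, $0_M$ for $a\in\mathfrak q$. For a supertropical monoid $U$ with $M=eU$: $D(U):=M\cup\{yz:y,z\in U,\exists y'\in M,\ y'<ey,\ y'z=eyz\}$; $\hat U:=U/E$ where $x\sim_E y$ iff $x=y$ or ($x,y\in D(U)$ and $ex=ey$), with the induced supertropical monoid structure (multiplication and $e$ induced, ghost ideal identified with $M$); $\sigma_U:U\to\hat U$ the projection. *)

theory Defs
  imports Main
begin

text \<open>The bipotent semiring M is a type 'm: commutative monoid (comm_monoid_mult) with
  a zero, a total order (linorder); addition is max and is therefore not a separate
  operation.\<close>

definition bipotent_semiring :: "'m::{linorder, comm_monoid_mult, zero} itself \<Rightarrow> bool" where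
  "bipotent_semiring _ \<longleftrightarrow>
     (\<forall>x::'m. 0 * x = 0) \<and> (\<forall>x::'m. 0 \<le> x) \<and>
     (\<forall>x y z::'m. x \<le> y \<longrightarrow> x * z \<le> y * z)"

definition m_valuation :: "('r::comm_semiring_1 \<Rightarrow> 'm::{linorder, comm_monoid_mult, zero}) \<Rightarrow> bool" where
  "m_valuation v \<longleftrightarrow> v 0 = 0 \<and> v 1 = 1 \<and> (\<forall>a b. v (a * b) = v a * v b) \<and>
     (\<forall>a b. v (a + b) \<le> max (v a) (v b))"

definition supp :: "('r::comm_semiring_1 \<Rightarrow> 'm::zero) \<Rightarrow> 'r set" where
  "supp v = {a. v a = 0}"

record 'a stm =
  carr :: "'a set"
  smul :: "'a \<Rightarrow> 'a \<Rightarrow> 'a"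
  sone :: 'a
  szero :: 'a
  sghost :: 'a
  sle :: "'a \<Rightarrow> 'a \<Rightarrow> bool"

definition ghosts :: "'a stm \<Rightarrow> 'a set" where
  "ghosts U = {smul U (sghost U) x | x. x \<in> carr U}"

definition supertropical_monoid :: "'a stm \<Rightarrow> bool" where
  "supertropical_monoid U \<longleftrightarrow>
     sone U \<in> carr U \<and> szero U \<in> carr U \<and> sghost U \<in> carr U \<and>
     (\<forall>x\<in>carr U. \<forall>y\<in>carr U. smul U x y \<in> carr U) \<and>
     (\<forall>x\<in>carr U. \<forall>y\<in>carr U. smul U x y = smul U y x) \<and>
     (\<forall>x\<in>carr U. \<forall>y\<in>carr U. \<forall>z\<in>carr U. smul U (smul U x y) z = smul U x (smul U y z)) \<and>
     (\<forall>x\<in>carr U. smul U (sone U) x = x) \<and>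
     (\<forall>x\<in>carr U. smul U (szero U) x = szero U) \<and>
     smul U (sghost U) (sghost U) = sghost U \<and>
     (\<forall>x\<in>carr U. smul U (sghost U) x = szero U \<longrightarrow> x = szero U) \<and>
     \<comment> \<open>total order on eU making it a bipotent semiring\<close>
     (\<forall>x\<in>ghosts U. sle U x x) \<and>
     (\<forall>x\<in>ghosts U. \<forall>y\<in>ghosts U. sle U x y \<and> sle U y x \<longrightarrow> x = y) \<and>
     (\<forall>x\<in>ghosts U. \<forall>y\<in>ghosts U. \<forall>z\<in>ghosts U. sle U x y \<and> sle U y z \<longrightarrow> sle U x z) \<and>
     (\<forall>x\<in>ghosts U. \<forall>y\<in>ghosts U. sle U x y \<or> sle U y x) \<and>
     (\<forall>x\<in>ghosts U. sle U (szero U) x) \<and>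
     (\<forall>x\<in>ghosts U. \<forall>y\<in>ghosts U. \<forall>z\<in>ghosts U. sle U x y \<longrightarrow> sle U (smul U x z) (smul U y z))"

text \<open>The supertropical addition determined by multiplication, e and the order on eU.\<close>
definition sadd :: "'a stm \<Rightarrow> 'a \<Rightarrow> 'a \<Rightarrow> 'a" where
  "sadd U x y =
     (let ex = smul U (sghost U) x; ey = smul U (sghost U) y in
      if ex = ey then ex else if sle U ex ey then y else x)"

definition smax :: "'a stm \<Rightarrow> 'a \<Rightarrow> 'a \<Rightarrow> 'a" where
  "smax U x y = (if sle U x y then y else x)"

definition supertropical_semiring :: "'a stm \<Rightarrow> bool" where
  "supertropical_semiring U \<longleftrightarrow> supertropical_monoid U \<and>
     (\<forall>x\<in>carr U. \<forall>y\<in>carr U. \<forall>z\<in>carr U. sadd U (sadd U x y) z = sadd U x (sadd U y z)) \<and>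
     (\<forall>x\<in>carr U. \<forall>y\<in>carr U. \<forall>z\<in>carr U.
        smul U x (sadd U y z) = sadd U (smul U x y) (smul U x z))"

definition m_supervaluation :: "'a stm \<Rightarrow> ('r::comm_semiring_1 \<Rightarrow> 'a) \<Rightarrow> bool" where
  "m_supervaluation U \<phi> \<longleftrightarrow>
     (\<forall>a. \<phi> a \<in> carr U) \<and> \<phi> 0 = szero U \<and> \<phi> 1 = sone U \<and>
     (\<forall>a b. \<phi> (a * b) = smul U (\<phi> a) (\<phi> b)) \<and>
     (\<forall>a b. sle U (smul U (sghost U) (\<phi> (a + b)))
                   (smax U (smul U (sghost U) (\<phi> a)) (smul U (sghost U) (\<phi> b))))"

definition supervaluation :: "'a stm \<Rightarrow> ('r::comm_semiring_1 \<Rightarrow> 'a) \<Rightarrow> bool" where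
  "supervaluation U \<phi> \<longleftrightarrow> supertropical_semiring U \<and> m_supervaluation U \<phi>"

text \<open>Identification of the ghost ideal eU with M: an isomorphism of bipotent semirings
  (monoid isomorphism M \<rightarrow> eU, with unit e, preserving zero and the order).\<close>
definition ghost_ident :: "'a stm \<Rightarrow> ('m::{linorder, comm_monoid_mult, zero} \<Rightarrow> 'a) \<Rightarrow> bool" where
  "ghost_ident U \<iota> \<longleftrightarrow> bij_betw \<iota> UNIV (ghosts U) \<and>
     \<iota> 1 = sghost U \<and> \<iota> 0 = szero U \<and>
     (\<forall>m n. \<iota> (m * n) = smul U (\<iota> m) (\<iota> n)) \<and>
     (\<forall>m n. m \<le> n \<longleftrightarrow> sle U (\<iota> m) (\<iota> n))"

definition covers :: "'a stm \<Rightarrow> ('m::{linorder, comm_monoid_mult, zero} \<Rightarrow> 'a)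
    \<Rightarrow> ('r::comm_semiring_1 \<Rightarrow> 'a) \<Rightarrow> ('r \<Rightarrow> 'm) \<Rightarrow> bool" where
  "covers U \<iota> \<phi> v \<longleftrightarrow> supervaluation U \<phi> \<and> ghost_ident U \<iota> \<and>
     (\<forall>a. smul U (sghost U) (\<phi> a) = \<iota> (v a))"

definition semiring_hom :: "'a stm \<Rightarrow> 'b stm \<Rightarrow> ('a \<Rightarrow> 'b) \<Rightarrow> bool" where
  "semiring_hom U V \<alpha> \<longleftrightarrow>
     (\<forall>x\<in>carr U. \<alpha> x \<in> carr V) \<and> \<alpha> (szero U) = szero V \<and> \<alpha> (sone U) = sone V \<and>
     (\<forall>x\<in>carr U. \<forall>y\<in>carr U. \<alpha> (smul U x y) = smul V (\<alpha> x) (\<alpha> y)) \<and>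
     (\<forall>x\<in>carr U. \<forall>y\<in>carr U. \<alpha> (sadd U x y) = sadd V (\<alpha> x) (\<alpha> y))"

definition over_M :: "('m \<Rightarrow> 'a) \<Rightarrow> ('m \<Rightarrow> 'b) \<Rightarrow> ('a \<Rightarrow> 'b) \<Rightarrow> bool" where
  "over_M \<iota>U \<iota>V \<alpha> \<longleftrightarrow> (\<forall>m. \<alpha> (\<iota>U m) = \<iota>V m)"

definition phi0 :: "('r::comm_semiring_1 \<Rightarrow> 'm::{linorder, comm_monoid_mult, zero}) \<Rightarrow> 'r \<Rightarrow> 'r + 'm" where
  "phi0 v a = (if a \<in> supp v then Inr 0 else Inl a)"

definition u0mul :: "('r::comm_semiring_1 \<Rightarrow> 'm::{linorder, comm_monoid_mult, zero})
    \<Rightarrow> 'r + 'm \<Rightarrow> 'r + 'm \<Rightarrow> 'r + 'm" where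
  "u0mul v x y =
     (case x of
        Inl a \<Rightarrow> (case y of Inl b \<Rightarrow> (if a * b \<in> supp v then Inr 0 else Inl (a * b))
                          | Inr n \<Rightarrow> Inr (v a * n))
      | Inr m \<Rightarrow> (case y of Inl b \<Rightarrow> Inr (m * v b)
                          | Inr n \<Rightarrow> Inr (m * n)))"

definition u0le :: "'r + 'm::linorder \<Rightarrow> 'r + 'm \<Rightarrow> bool" where
  "u0le x y = (case (x, y) of (Inr m, Inr n) \<Rightarrow> m \<le> n | _ \<Rightarrow> False)"

definition U0 :: "('r::comm_semiring_1 \<Rightarrow> 'm::{linorder, comm_monoid_mult, zero}) \<Rightarrow> ('r + 'm) stm" where
  "U0 v = \<lparr> carr = Inl ` (- supp v) \<union> range Inr, smul = u0mul v, sone = phi0 v 1,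
            szero = Inr 0, sghost = Inr 1, sle = u0le \<rparr>"

definition Dset :: "'a stm \<Rightarrow> 'a set" where
  "Dset U = ghosts U \<union>
     {smul U y z | y z. y \<in> carr U \<and> z \<in> carr U \<and>
        (\<exists>y'\<in>ghosts U. sle U y' (smul U (sghost U) y) \<and> y' \<noteq> smul U (sghost U) y \<and>
            smul U y' z = smul U (sghost U) (smul U y z))}"

definition Erel :: "'a stm \<Rightarrow> ('a \<times> 'a) set" where
  "Erel U = {(x, y). x \<in> carr U \<and> y \<in> carr U \<and>
      (x = y \<or> (x \<in> Dset U \<and> y \<in> Dset U \<and> smul U (sghost U) x = smul U (sghost U) y))}"

definition sigma :: "'a stm \<Rightarrow> 'a \<Rightarrow> 'a set" where
  "sigma U x = Erel U `` {x}"

text \<open>Induced structure on U/E; the order on the ghost classes is the order of the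
  unique ghost representative (the ghost ideal of U/E is identified with eU).\<close>
definition hat :: "'a stm \<Rightarrow> 'a set stm" where
  "hat U = \<lparr> carr = carr U // Erel U,
             smul = (\<lambda>A B. Erel U `` {smul U x y | x y. x \<in> A \<and> y \<in> B}),
             sone = sigma U (sone U), szero = sigma U (szero U), sghost = sigma U (sghost U),
             sle = (\<lambda>A B. \<exists>x\<in>A. \<exists>y\<in>B. x \<in> ghosts U \<and> y \<in> ghosts U \<and> sle U x y) \<rparr>"

definition Uv :: "('r::comm_semiring_1 \<Rightarrow> 'm::{linorder, comm_monoid_mult, zero}) \<Rightarrow> ('r + 'm) set stm" where
  "Uv v = hat (U0 v)"

definition phiv :: "('r::comm_semiring_1 \<Rightarrow> 'm::{linorder, comm_monoid_mult, zero}) \<Rightarrow> 'r \<Rightarrow> ('r + 'm) set" where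
  "phiv v a = sigma (U0 v) (phi0 v a)"

definition iotav :: "('r::comm_semiring_1 \<Rightarrow> 'm::{linorder, comm_monoid_mult, zero}) \<Rightarrow> 'm \<Rightarrow> ('r + 'm) set" where
  "iotav v m = sigma (U0 v) (Inr m)"

end

theory Submission imports Defs begin

locale mv =
  fixes v :: "'r::comm_semiring_1 \<Rightarrow> 'm::{linorder, comm_monoid_mult, zero}"
  assumes bip: "bipotent_semiring TYPE('m)"
    and mval: "m_valuation v"
begin

lemma zm[simp]: "0 * (x::'m) = 0" using bip unfolding bipotent_semiring_def by auto
lemma mz[simp]: "(x::'m) * 0 = 0" using zm by (metis mult.commute)
lemma zle[simp]: "0 \<le> (x::'m)" using bip unfolding bipotent_semiring_def by auto
lemma monoR: "(x::'m) \<le> y \<Longrightarrow> x * z \<le> y * z" using bip unfolding bipotent_semiring_def by auto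
lemma monoL: "(x::'m) \<le> y \<Longrightarrow> z * x \<le> z * y" using monoR by (metis mult.commute)
lemma v0[simp]: "v 0 = 0" using mval unfolding m_valuation_def by auto
lemma v1[simp]: "v 1 = 1" using mval unfolding m_valuation_def by auto
lemma vmul[simp]: "v (a * b) = v a * v b" using mval unfolding m_valuation_def by auto
lemma vadd: "v (a + b) \<le> max (v a) (v b)" using mval unfolding m_valuation_def by auto

definition C where "C = carr (U0 v)"
definition gh :: "'r + 'm \<Rightarrow> 'm" where "gh x = (case x of Inl a \<Rightarrow> v a | Inr m \<Rightarrow> m)"
definition D where "D = Dset (U0 v)"
definition nz where "nz x = (if x \<in> D then Inr (gh x) else x)"
definition G where "G m = sigma (U0 v) (Inr m)"
definition u0add where "u0add x y = (if gh x = gh y then Inr (gh x) else if gh x \<le> gh y then y else x)"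

lemma gh_simps[simp]: "gh (Inl a) = v a" "gh (Inr m) = m" by (auto simp: gh_def)

lemma C_simps[simp]: "Inl a \<in> C \<longleftrightarrow> v a \<noteq> 0" "Inr m \<in> C"
  by (auto simp: C_def U0_def supp_def)

lemma U0_simps[simp]: "carr (U0 v) = C" "smul (U0 v) = u0mul v" "sone (U0 v) = phi0 v 1"
  "szero (U0 v) = Inr 0" "sghost (U0 v) = Inr 1" "sle (U0 v) = u0le"
  by (auto simp: C_def U0_def)

lemma mul_simps[simp]:
  "u0mul v (Inl a) (Inl b) = (if v a * v b = 0 then Inr 0 else Inl (a * b))"
  "u0mul v (Inl a) (Inr n) = Inr (v a * n)"
  "u0mul v (Inr m) (Inl b) = Inr (m * v b)"
  "u0mul v (Inr m) (Inr n) = Inr (m * n)"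
  by (auto simp: u0mul_def supp_def)

lemma u0le_simps[simp]: "u0le (Inr m) (Inr n) \<longleftrightarrow> m \<le> n" "\<not> u0le (Inl a) y" "\<not> u0le x (Inl b)"
  by (auto simp: u0le_def split: sum.splits)

lemma gh_mul[simp]: "gh (u0mul v x y) = gh x * gh y"
  by (cases x; cases y; auto)

lemma Inr_mul[simp]: "u0mul v (Inr m) x = Inr (m * gh x)" "u0mul v x (Inr m) = Inr (gh x * m)"
  by (cases x; auto)+

lemma mul_comm: "u0mul v x y = u0mul v y x"
  by (cases x; cases y; auto simp: mult.commute)

lemma mul_assoc: "u0mul v (u0mul v x y) z = u0mul v x (u0mul v y z)"
  by (cases x; cases y; cases z; auto simp: mult.assoc) (metis mult.assoc zm)+

lemma mul_C: "x \<in> C \<Longrightarrow> y \<in> C \<Longrightarrow> u0mul v x y \<in> C"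
  by (cases x; cases y; auto)

lemma gh_zero: "x \<in> C \<Longrightarrow> gh x = 0 \<Longrightarrow> x = Inr 0"
  by (cases x; auto)

lemma phi0_C: "phi0 v a \<in> C" by (auto simp: phi0_def supp_def)
lemma gh_phi0[simp]: "gh (phi0 v a) = v a" by (auto simp: phi0_def supp_def)

lemma one_mul: "x \<in> C \<Longrightarrow> u0mul v (phi0 v 1) x = x"
proof (cases "(1::'m) = 0")
  case True
  hence all0: "\<And>m::'m. m = 0" by (metis mult_1_right mz)
  assume "x \<in> C" thus ?thesis using True all0 by (cases x; auto simp: phi0_def supp_def)
next
  case False
  assume "x \<in> C" thus ?thesis using False by (cases x; auto simp: phi0_def supp_def)
qed

lemma phi0_mul: "phi0 v (a * b) = u0mul v (phi0 v a) (phi0 v b)"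
  by (auto simp: phi0_def supp_def)

lemma ghosts_U0: "ghosts (U0 v) = range Inr"
  unfolding ghosts_def by (auto simp: image_def) (metis C_simps(2) gh_simps(2))


lemma D_char: "x \<in> D \<longleftrightarrow> (\<exists>m. x = Inr m) \<or>
   (\<exists>y z n. y \<in> C \<and> z \<in> C \<and> n \<le> gh y \<and> n \<noteq> gh y \<and> n * gh z = gh y * gh z \<and> x = u0mul v y z)"
  unfolding D_def Dset_def ghosts_U0 by auto

lemma ghost_D[simp]: "Inr m \<in> D" by (simp add: D_char)

lemma D_C: "x \<in> D \<Longrightarrow> x \<in> C"
  by (auto simp: D_char mul_C)

lemma D_ideal: assumes "x \<in> D" "w \<in> C" shows "u0mul v x w \<in> D"
proof -
  from assms(1) consider (g) m where "x = Inr m" | (p) y z n where "y \<in> C" "z \<in> C" "n \<le> gh y" "n \<noteq> gh y"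
     "n * gh z = gh y * gh z" "x = u0mul v y z" unfolding D_char by blast
  then show ?thesis
  proof cases
    case g thus ?thesis by simp
  next
    case p
    have "u0mul v x w = u0mul v y (u0mul v z w)" using p by (simp add: mul_assoc)
    moreover have "n * gh (u0mul v z w) = gh y * gh (u0mul v z w)"
      using p by (simp add: mult.assoc[symmetric])
    ultimately show ?thesis unfolding D_char using p assms mul_C by blast
  qed
qed

lemma D_dist: "x \<in> C \<Longrightarrow> z \<in> C \<Longrightarrow> n < gh z \<Longrightarrow> n * gh x = gh z * gh x \<Longrightarrow> u0mul v z x \<in> D"
  unfolding D_char by (rule disjI2, rule exI[of _ z], rule exI[of _ x], rule exI[of _ n]) auto

lemma D_Inl: assumes "Inl c \<in> D"
  shows "\<exists>a b n. v a \<noteq> 0 \<and> v b \<noteq> 0 \<and> c = a * b \<and> n < v a \<and> n * v b = v a * v b"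
proof -
  from assms obtain y z n where p: "y \<in> C" "z \<in> C" "n \<le> gh y" "n \<noteq> gh y"
     "n * gh z = gh y * gh z" "Inl c = u0mul v y z" unfolding D_char by blast
  then obtain a b where "y = Inl a" "z = Inl b"
    by (cases y; cases z; auto)
  moreover have "n < gh y" using p(3,4) by simp
  ultimately show ?thesis using p by (auto split: if_splits)
qed

lemma nz_Inr[simp]: "nz (Inr m) = Inr m" by (simp add: nz_def)
lemma nz_C: "x \<in> C \<Longrightarrow> nz x \<in> C" by (simp add: nz_def)

lemma nz_eq: assumes "x \<in> C" "y \<in> C"
  shows "nz x = nz y \<longleftrightarrow> x = y \<or> (x \<in> D \<and> y \<in> D \<and> gh x = gh y)"
  using assms by (auto simp: nz_def)

lemma Erel_iff: "(x, y) \<in> Erel (U0 v) \<longleftrightarrow> x \<in> C \<and> y \<in> C \<and> nz x = nz y"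
  unfolding Erel_def by (auto simp: nz_eq D_def[symmetric])

lemma sigma_eq: "x \<in> C \<Longrightarrow> sigma (U0 v) x = {y \<in> C. nz y = nz x}"
  unfolding sigma_def by (auto simp: Erel_iff)

lemma sigma_in: "x \<in> C \<Longrightarrow> x \<in> sigma (U0 v) x" by (simp add: sigma_eq)

lemma sigma_eq_iff: "x \<in> C \<Longrightarrow> y \<in> C \<Longrightarrow> sigma (U0 v) x = sigma (U0 v) y \<longleftrightarrow> nz x = nz y"
  by (auto simp: sigma_eq)

lemma nz_cong1: assumes "x \<in> C" "x' \<in> C" "y \<in> C" "nz x = nz x'"
  shows "nz (u0mul v x y) = nz (u0mul v x' y)"
proof -
  from assms have "x = x' \<or> (x \<in> D \<and> x' \<in> D \<and> gh x = gh x')" by (simp add: nz_eq)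
  thus ?thesis
  proof
    assume h: "x \<in> D \<and> x' \<in> D \<and> gh x = gh x'"
    hence "u0mul v x y \<in> D" "u0mul v x' y \<in> D" using D_ideal assms by auto
    thus ?thesis using h by (simp add: nz_def)
  qed simp
qed

lemma nz_cong: assumes "x \<in> C" "x' \<in> C" "y \<in> C" "y' \<in> C" "nz x = nz x'" "nz y = nz y'"
  shows "nz (u0mul v x y) = nz (u0mul v x' y')"
proof -
  have "nz (u0mul v x y) = nz (u0mul v x' y)" using nz_cong1 assms by blast
  also have "\<dots> = nz (u0mul v y x')" by (simp add: mul_comm)
  also have "\<dots> = nz (u0mul v y' x')" using nz_cong1 assms by blast
  finally show ?thesis by (simp add: mul_comm)
qed

lemma carr_hat: "carr (hat (U0 v)) = sigma (U0 v) ` C"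
  unfolding hat_def quotient_def sigma_def by simp blast

lemma hat_mul: assumes "x \<in> C" "y \<in> C"
  shows "smul (hat (U0 v)) (sigma (U0 v) x) (sigma (U0 v) y) = sigma (U0 v) (u0mul v x y)"
proof -
  let ?S = "{u0mul v x' y' |x' y'. x' \<in> sigma (U0 v) x \<and> y' \<in> sigma (U0 v) y}"
  have S: "s \<in> C \<and> nz s = nz (u0mul v x y)" if "s \<in> ?S" for s
  proof -
    from that obtain x' y' where h: "s = u0mul v x' y'" "x' \<in> sigma (U0 v) x" "y' \<in> sigma (U0 v) y"
      by blast
    hence "x' \<in> C" "nz x' = nz x" "y' \<in> C" "nz y' = nz y" using sigma_eq assms by auto
    thus ?thesis using h(1) mul_C nz_cong[of x' x y' y] assms by auto
  qed
  have xy: "u0mul v x y \<in> ?S" using assms sigma_in by blast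
  have xyC: "u0mul v x y \<in> C" using assms mul_C by blast
  have "Erel (U0 v) `` ?S = sigma (U0 v) (u0mul v x y)"
  proof
    show "Erel (U0 v) `` ?S \<subseteq> sigma (U0 v) (u0mul v x y)"
    proof
      fix w assume "w \<in> Erel (U0 v) `` ?S"
      then obtain s where "s \<in> ?S" "(s, w) \<in> Erel (U0 v)" by blast
      thus "w \<in> sigma (U0 v) (u0mul v x y)" using S unfolding Erel_iff sigma_eq[OF xyC] by auto
    qed
    show "sigma (U0 v) (u0mul v x y) \<subseteq> Erel (U0 v) `` ?S"
    proof
      fix w assume "w \<in> sigma (U0 v) (u0mul v x y)"
      hence "(u0mul v x y, w) \<in> Erel (U0 v)" unfolding Erel_iff sigma_eq[OF xyC] using xyC by auto
      thus "w \<in> Erel (U0 v) `` ?S" using xy by blast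
    qed
  qed
  thus ?thesis by (simp add: hat_def)
qed

lemma hat_simps[simp]: "sghost (hat (U0 v)) = G 1" "szero (hat (U0 v)) = G 0"
  "sone (hat (U0 v)) = sigma (U0 v) (phi0 v 1)"
  by (auto simp: hat_def G_def)

lemma hat_e: "x \<in> C \<Longrightarrow> smul (hat (U0 v)) (G 1) (sigma (U0 v) x) = G (gh x)"
  unfolding G_def by (simp add: hat_mul)

lemma G_mul: "smul (hat (U0 v)) (G m) (G n) = G (m * n)"
  unfolding G_def by (simp add: hat_mul)

lemma G_inj[simp]: "G m = G n \<longleftrightarrow> m = n"
  unfolding G_def by (simp add: sigma_eq_iff)

lemma G_carr: "G m \<in> carr (hat (U0 v))" unfolding G_def carr_hat by simp

lemma ghosts_hat: "ghosts (hat (U0 v)) = range G"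
proof
  show "ghosts (hat (U0 v)) \<subseteq> range G"
    unfolding ghosts_def carr_hat hat_simps using hat_e by blast
  show "range G \<subseteq> ghosts (hat (U0 v))"
  proof
    fix X assume "X \<in> range G"
    then obtain m where m: "X = G m" by blast
    have "smul (hat (U0 v)) (G 1) (sigma (U0 v) (Inr m)) = G m" using hat_e[of "Inr m"] by simp
    thus "X \<in> ghosts (hat (U0 v))" unfolding ghosts_def carr_hat hat_simps m
      using C_simps(2) by blast
  qed
qed

lemma G_mem_ghost: "Inr k \<in> G m \<longleftrightarrow> k = m"
  unfolding G_def by (simp add: sigma_eq)

lemma hat_sle: "sle (hat (U0 v)) (G m) (G n) \<longleftrightarrow> m \<le> n"
proof -
  have "sle (hat (U0 v)) (G m) (G n) \<longleftrightarrow>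
     (\<exists>x\<in>G m. \<exists>y\<in>G n. x \<in> range Inr \<and> y \<in> range Inr \<and> u0le x y)"
    by (simp add: hat_def ghosts_U0)
  also have "\<dots> \<longleftrightarrow> m \<le> n"
  proof
    assume "\<exists>x\<in>G m. \<exists>y\<in>G n. x \<in> range Inr \<and> y \<in> range Inr \<and> u0le x y"
    thus "m \<le> n" by (auto simp: G_mem_ghost)
  next
    assume "m \<le> n"
    moreover have "Inr m \<in> G m" "Inr n \<in> G n" by (auto simp: G_mem_ghost)
    ultimately show "\<exists>x\<in>G m. \<exists>y\<in>G n. x \<in> range Inr \<and> y \<in> range Inr \<and> u0le x y"
      by force
  qed
  finally show ?thesis .
qed

lemma gh_add: "gh (u0add x y) = max (gh x) (gh y)"
  by (auto simp: u0add_def max_def)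

lemma add_C: "x \<in> C \<Longrightarrow> y \<in> C \<Longrightarrow> u0add x y \<in> C"
  by (auto simp: u0add_def)

lemma hat_add: assumes "x \<in> C" "y \<in> C"
  shows "sadd (hat (U0 v)) (sigma (U0 v) x) (sigma (U0 v) y) = sigma (U0 v) (u0add x y)"
  using assms by (simp add: sadd_def Let_def hat_e hat_sle u0add_def G_def[symmetric])

lemma add_assoc: "u0add (u0add x y) z = u0add x (u0add y z)"
  by (auto simp: u0add_def)

lemma distrib: assumes "x \<in> C" "y \<in> C" "z \<in> C"
  shows "nz (u0mul v x (u0add y z)) = nz (u0add (u0mul v x y) (u0mul v x z))"
proof (cases "gh y = gh z")
  case True thus ?thesis by (simp add: u0add_def)
next
  case False
  show ?thesis
  proof (cases "gh y \<le> gh z")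
    case yz: True
    with False have lt: "gh y < gh z" by simp
    have le: "gh x * gh y \<le> gh x * gh z" using yz monoL by blast
    show ?thesis
    proof (cases "gh x * gh y = gh x * gh z")
      case True
      have "u0mul v z x \<in> D" using D_dist[OF assms(1) assms(3) lt] True by (simp add: mult.commute)
      hence "nz (u0mul v x z) = Inr (gh x * gh z)" by (simp add: nz_def mul_comm)
      thus ?thesis using True lt yz by (simp add: u0add_def)
    next
      case False thus ?thesis using le lt by (auto simp: u0add_def)
    qed
  next
    case nle: False
    hence lt: "gh z < gh y" by simp
    have le: "gh x * gh z \<le> gh x * gh y" using lt monoL by (meson less_imp_le)
    show ?thesis
    proof (cases "gh x * gh y = gh x * gh z")
      case True
      have "u0mul v y x \<in> D" using D_dist[OF assms(1) assms(2) lt] True by (simp add: mult.commute)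
      hence "nz (u0mul v x y) = Inr (gh x * gh y)" by (simp add: nz_def mul_comm)
      thus ?thesis using True lt nle by (simp add: u0add_def)
    next
      case False thus ?thesis using le lt nle by (auto simp: u0add_def)
    qed
  qed
qed


lemma ball_img: "(\<forall>x\<in>f ` A. P x) \<longleftrightarrow> (\<forall>y\<in>A. P (f y))" by auto
lemma ball_rng: "(\<forall>x\<in>range f. P x) \<longleftrightarrow> (\<forall>y. P (f y))" by auto

lemma G_sig: "G m = sigma (U0 v) (Inr m)" by (simp add: G_def)

lemma hat_stm: "supertropical_monoid (hat (U0 v))"
  unfolding supertropical_monoid_def ghosts_hat carr_hat ball_img ball_rng hat_simps
proof (intro conjI)
  show "sigma (U0 v) (phi0 v 1) \<in> sigma (U0 v) ` C" using phi0_C by simp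
  show "G 0 \<in> sigma (U0 v) ` C" "G 1 \<in> sigma (U0 v) ` C" by (simp_all add: G_def)
  show "\<forall>y\<in>C. \<forall>ya\<in>C. smul (hat (U0 v)) (sigma (U0 v) y) (sigma (U0 v) ya) \<in> sigma (U0 v) ` C"
    by (simp add: hat_mul mul_C)
  show "\<forall>y\<in>C. \<forall>ya\<in>C. smul (hat (U0 v)) (sigma (U0 v) y) (sigma (U0 v) ya) =
     smul (hat (U0 v)) (sigma (U0 v) ya) (sigma (U0 v) y)"
    by (simp add: hat_mul mul_comm)
  show "\<forall>y\<in>C. \<forall>ya\<in>C. \<forall>yb\<in>C. smul (hat (U0 v)) (smul (hat (U0 v)) (sigma (U0 v) y) (sigma (U0 v) ya)) (sigma (U0 v) yb) =
      smul (hat (U0 v)) (sigma (U0 v) y) (smul (hat (U0 v)) (sigma (U0 v) ya) (sigma (U0 v) yb))"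
    by (simp add: hat_mul mul_C mul_assoc)
  show "\<forall>y\<in>C. smul (hat (U0 v)) (sigma (U0 v) (phi0 v 1)) (sigma (U0 v) y) = sigma (U0 v) y"
    by (simp add: hat_mul phi0_C one_mul)
  show "\<forall>y\<in>C. smul (hat (U0 v)) (G 0) (sigma (U0 v) y) = G 0"
    by (simp add: G_sig hat_mul)
  show "smul (hat (U0 v)) (G 1) (G 1) = G 1" by (simp add: G_mul)
  show "\<forall>y\<in>C. smul (hat (U0 v)) (G 1) (sigma (U0 v) y) = G 0 \<longrightarrow> sigma (U0 v) y = G 0"
  proof (intro ballI impI)
    fix y assume y: "y \<in> C" "smul (hat (U0 v)) (G 1) (sigma (U0 v) y) = G 0"
    hence "G (gh y) = G 0" by (simp only: hat_e)
    hence "y = Inr 0" using y(1) gh_zero by simp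
    thus "sigma (U0 v) y = G 0" by (simp add: G_def)
  qed
qed (auto simp: hat_sle G_mul intro: monoR)

lemma hat_sts: "supertropical_semiring (hat (U0 v))"
  unfolding supertropical_semiring_def carr_hat ball_img
proof (intro conjI hat_stm ballI)
  fix x y z assume xyz: "x \<in> C" "y \<in> C" "z \<in> C"
  show "sadd (hat (U0 v)) (sadd (hat (U0 v)) (sigma (U0 v) x) (sigma (U0 v) y)) (sigma (U0 v) z) =
       sadd (hat (U0 v)) (sigma (U0 v) x) (sadd (hat (U0 v)) (sigma (U0 v) y) (sigma (U0 v) z))"
    using xyz by (simp add: hat_add add_C add_assoc)
  show "smul (hat (U0 v)) (sigma (U0 v) x) (sadd (hat (U0 v)) (sigma (U0 v) y) (sigma (U0 v) z)) =
       sadd (hat (U0 v)) (smul (hat (U0 v)) (sigma (U0 v) x) (sigma (U0 v) y))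
        (smul (hat (U0 v)) (sigma (U0 v) x) (sigma (U0 v) z))"
    using xyz by (simp add: hat_add add_C hat_mul mul_C sigma_eq_iff distrib)
qed

lemma phiv_covers: "covers (Uv v) (iotav v) (phiv v) v"
  unfolding covers_def supervaluation_def Uv_def
proof (intro conjI hat_sts)
  have iG: "iotav v = G" by (auto simp: iotav_def G_def)
  have pe: "\<And>a. smul (hat (U0 v)) (G 1) (phiv v a) = G (v a)"
    unfolding phiv_def using phi0_C by (simp add: hat_e)
  show "ghost_ident (hat (U0 v)) (iotav v)"
    unfolding ghost_ident_def iG ghosts_hat
    by (auto simp: bij_betw_def inj_on_def G_mul hat_sle)
  show "\<forall>a. smul (hat (U0 v)) (sghost (hat (U0 v))) (phiv v a) = iotav v (v a)"
    using pe iG by simp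
  show "m_supervaluation (hat (U0 v)) (phiv v)"
    unfolding m_supervaluation_def
  proof (intro conjI allI)
    fix a b
    show "phiv v a \<in> carr (hat (U0 v))" by (simp add: phiv_def carr_hat phi0_C)
    show "phiv v (a * b) = smul (hat (U0 v)) (phiv v a) (phiv v b)"
      by (simp add: phiv_def hat_mul phi0_C phi0_mul)
    show "sle (hat (U0 v)) (smul (hat (U0 v)) (sghost (hat (U0 v))) (phiv v (a + b)))
        (smax (hat (U0 v)) (smul (hat (U0 v)) (sghost (hat (U0 v))) (phiv v a))
          (smul (hat (U0 v)) (sghost (hat (U0 v))) (phiv v b)))"
    proof -
      have sm: "smax (hat (U0 v)) (G (v a)) (G (v b)) = G (max (v a) (v b))"
        unfolding smax_def hat_sle max_def by simp
      show ?thesis unfolding hat_simps pe sm hat_sle by (rule vadd)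
    qed
    show "phiv v 0 = szero (hat (U0 v))" by (simp add: phiv_def phi0_def supp_def G_def)
    show "phiv v 1 = sone (hat (U0 v))" by (simp add: phiv_def)
  qed
qed

end

locale mvV = mv v for v :: "'r::comm_semiring_1 \<Rightarrow> 'm::{linorder, comm_monoid_mult, zero}" +
  fixes V :: "'u stm" and io :: "'m \<Rightarrow> 'u" and psi :: "'r \<Rightarrow> 'u"
  assumes cov: "covers V io psi v"
begin

lemma sts: "supertropical_semiring V" using cov by (simp add: covers_def supervaluation_def)
lemma stm: "supertropical_monoid V" using sts by (simp add: supertropical_semiring_def)
lemma gi: "ghost_ident V io" using cov by (simp add: covers_def)
lemma msv: "m_supervaluation V psi" using cov by (simp add: covers_def supervaluation_def)

abbreviation "e \<equiv> sghost V"
abbreviation "mul \<equiv> smul V"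

lemma mul_closed: "x \<in> carr V \<Longrightarrow> y \<in> carr V \<Longrightarrow> mul x y \<in> carr V"
  using stm by (simp add: supertropical_monoid_def)
lemma mulV_comm: "x \<in> carr V \<Longrightarrow> y \<in> carr V \<Longrightarrow> mul x y = mul y x"
  using stm by (simp add: supertropical_monoid_def)
lemma mulV_assoc: "x \<in> carr V \<Longrightarrow> y \<in> carr V \<Longrightarrow> z \<in> carr V \<Longrightarrow> mul (mul x y) z = mul x (mul y z)"
  using stm unfolding supertropical_monoid_def by blast
lemma e_carr: "e \<in> carr V" using stm by (simp add: supertropical_monoid_def)
lemma ghost0: "x \<in> carr V \<Longrightarrow> mul e x = szero V \<Longrightarrow> x = szero V"
  using stm by (simp add: supertropical_monoid_def)
lemma distV: "x \<in> carr V \<Longrightarrow> y \<in> carr V \<Longrightarrow> z \<in> carr V \<Longrightarrow>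
   mul x (sadd V y z) = sadd V (mul x y) (mul x z)"
  using sts by (simp add: supertropical_semiring_def)

lemma io_carr: "io m \<in> carr V"
proof -
  have "io m \<in> ghosts V" using gi by (auto simp: ghost_ident_def bij_betw_def)
  thus ?thesis unfolding ghosts_def using e_carr mul_closed by auto
qed
lemma io_inj[simp]: "io m = io n \<longleftrightarrow> m = n" using gi by (auto simp: ghost_ident_def bij_betw_def inj_on_def)
lemma io_mul: "io (m * n) = mul (io m) (io n)" using gi by (simp add: ghost_ident_def)
lemma io_le: "sle V (io m) (io n) \<longleftrightarrow> m \<le> n" using gi by (simp add: ghost_ident_def)
lemma io1: "io 1 = e" using gi by (simp add: ghost_ident_def)
lemma io0: "io 0 = szero V" using gi by (simp add: ghost_ident_def)
lemma e_io: "mul e (io m) = io m" using io_mul[of 1 m] io1 by simp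

lemma psi_carr: "psi a \<in> carr V" using msv by (simp add: m_supervaluation_def)
lemma psi_mul: "psi (a * b) = mul (psi a) (psi b)" using msv by (simp add: m_supervaluation_def)
lemma psi1: "psi 1 = sone V" using msv by (simp add: m_supervaluation_def)
lemma e_psi: "mul e (psi a) = io (v a)" using cov by (simp add: covers_def)

lemma psi_io: "mul (psi a) (io n) = io (v a * n)"
proof -
  have "mul (psi a) (io n) = mul (psi a) (mul e (io n))" by (simp add: e_io)
  also have "\<dots> = mul (mul e (psi a)) (io n)"
    using mulV_assoc[OF psi_carr e_carr io_carr] mulV_comm[OF psi_carr e_carr] by simp
  finally show ?thesis by (simp add: e_psi io_mul)
qed

lemma psi_zero: "v c = 0 \<Longrightarrow> psi c = szero V"
  using ghost0[OF psi_carr] e_psi io0 by metis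

lemma key: assumes "n < v a" "n * v b = v a * v b"
  shows "psi (a * b) = io (v (a * b))"
proof -
  have s1: "sadd V (io n) (psi a) = psi a"
  proof -
    have "n \<le> v a" "n \<noteq> v a" using assms(1) by auto
    thus ?thesis by (simp add: sadd_def Let_def e_io e_psi io_le)
  qed
  have "psi (a * b) = mul (psi b) (psi a)" by (simp add: psi_mul mulV_comm psi_carr)
  also have "\<dots> = mul (psi b) (sadd V (io n) (psi a))" by (simp add: s1)
  also have "\<dots> = sadd V (mul (psi b) (io n)) (mul (psi b) (psi a))"
    by (rule distV[OF psi_carr io_carr psi_carr])
  also have "\<dots> = io (v (a * b))"
  proof -
    have "mul (psi b) (psi a) = psi (b * a)" by (simp add: psi_mul)
    moreover have "v b * n = v a * v b" using assms(2) by (simp add: mult.commute)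
    ultimately show ?thesis
      by (simp add: sadd_def Let_def psi_io e_io e_psi mult.commute)
  qed
  finally show ?thesis .
qed

definition f :: "'r + 'm \<Rightarrow> 'u" where "f x = (case x of Inl a \<Rightarrow> psi a | Inr m \<Rightarrow> io m)"
lemma f_simps[simp]: "f (Inl a) = psi a" "f (Inr m) = io m" by (simp_all add: f_def)

lemma f_nz: assumes "x \<in> C" shows "f (nz x) = f x"
proof (cases x)
  case (Inl c)
  show ?thesis
  proof (cases "x \<in> D")
    case True
    then obtain a b n where "c = a * b" "n < v a" "n * v b = v a * v b" using D_Inl Inl by blast
    thus ?thesis using True Inl key by (simp add: nz_def)
  qed (simp add: nz_def)
qed simp

definition alpha :: "('r + 'm) set \<Rightarrow> 'u" where "alpha X = f (SOME x. x \<in> X)"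

lemma alpha_sigma: assumes "x \<in> C" shows "alpha (sigma (U0 v) x) = f x"
proof -
  have "(SOME y. y \<in> sigma (U0 v) x) \<in> sigma (U0 v) x" using sigma_in[OF assms] by (rule someI)
  then obtain y where y: "(SOME y. y \<in> sigma (U0 v) x) = y" "y \<in> C" "nz y = nz x"
    using assms by (auto simp: sigma_eq)
  have "f y = f x" using f_nz y(2,3) f_nz[OF assms] by metis
  thus ?thesis using y by (simp add: alpha_def)
qed

lemma f_carr: "f x \<in> carr V" by (cases x) (auto simp: psi_carr io_carr)

lemma f_mul: "f (u0mul v x y) = mul (f x) (f y)"
proof (cases x; cases y)
  fix a b assume h: "x = Inl a" "y = Inl b"
  show ?thesis using h psi_zero[of "a*b"] by (auto simp: io0 psi_mul)
next
  fix a m assume h: "x = Inl a" "y = Inr m"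
  show ?thesis using h by (simp add: psi_io)
next
  fix a m assume h: "x = Inr m" "y = Inl a"
  show ?thesis using h mulV_comm[OF io_carr psi_carr, of m a] psi_io[of a m] by (simp add: mult.commute)
next
  fix m n assume h: "x = Inr m" "y = Inr n"
  show ?thesis using h by (simp add: io_mul)
qed

lemma f_e: "mul e (f x) = io (gh x)" by (cases x) (simp_all add: e_psi e_io)

lemma f_add: "f (u0add x y) = sadd V (f x) (f y)"
  by (cases "gh x = gh y") (auto simp: u0add_def sadd_def Let_def f_e io_le)

lemma f_phi0: "f (phi0 v a) = psi a"
  by (auto simp: phi0_def supp_def psi_zero io0)

lemma alpha_hom: "semiring_hom (Uv v) V alpha"
  unfolding semiring_hom_def Uv_def carr_hat ball_img
proof (intro conjI ballI)
  fix x y assume xy: "x \<in> C" "y \<in> C"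
  show "alpha (sigma (U0 v) x) \<in> carr V" using xy by (simp add: alpha_sigma f_carr)
  show "alpha (smul (hat (U0 v)) (sigma (U0 v) x) (sigma (U0 v) y)) =
     mul (alpha (sigma (U0 v) x)) (alpha (sigma (U0 v) y))"
    using xy by (simp add: hat_mul alpha_sigma mul_C f_mul)
  show "alpha (sadd (hat (U0 v)) (sigma (U0 v) x) (sigma (U0 v) y)) =
     sadd V (alpha (sigma (U0 v) x)) (alpha (sigma (U0 v) y))"
    using xy by (simp add: hat_add alpha_sigma add_C f_add)
next
  show "alpha (szero (hat (U0 v))) = szero V"
    by (simp add: G_def alpha_sigma io0)
  show "alpha (sone (hat (U0 v))) = sone V"
    by (simp add: alpha_sigma phi0_C f_phi0 psi1)
qed

lemma alpha_over: "over_M (iotav v) io alpha"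
  by (simp add: over_M_def iotav_def alpha_sigma)

lemma alpha_psi: "psi a = alpha (phiv v a)"
  by (simp add: phiv_def alpha_sigma phi0_C f_phi0)

lemma alpha_unique: assumes "over_M (iotav v) io beta" "\<forall>a. psi a = beta (phiv v a)"
  shows "\<forall>x\<in>carr (Uv v). beta x = alpha x"
  unfolding Uv_def carr_hat ball_img
proof
  fix x assume x: "x \<in> C"
  show "beta (sigma (U0 v) x) = alpha (sigma (U0 v) x)"
  proof (cases x)
    case (Inl a)
    hence "sigma (U0 v) x = phiv v a" using x by (simp add: phiv_def phi0_def supp_def)
    thus ?thesis using assms(2) alpha_psi by metis
  next
    case (Inr m)
    hence "sigma (U0 v) x = iotav v m" by (simp add: iotav_def)
    thus ?thesis using assms(1) alpha_over unfolding over_M_def by metis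
  qed
qed

end

theorem theorem6p9:
  fixes v :: "'r::comm_semiring_1 \<Rightarrow> 'm::{linorder, comm_monoid_mult, zero}"
  assumes "bipotent_semiring TYPE('m)"
    and "m_valuation v"
    and "surj v"
  shows "covers (Uv v) (iotav v) (phiv v) v \<and>
    (\<forall>(V :: 'u stm) \<iota>V \<psi>. covers V \<iota>V \<psi> v \<longrightarrow>
       (\<exists>\<alpha>. semiring_hom (Uv v) V \<alpha> \<and> over_M (iotav v) \<iota>V \<alpha> \<and> (\<forall>a. \<psi> a = \<alpha> (phiv v a)) \<and>
          (\<forall>\<beta>. semiring_hom (Uv v) V \<beta> \<and> over_M (iotav v) \<iota>V \<beta> \<and> (\<forall>a. \<psi> a = \<beta> (phiv v a))
                \<longrightarrow> (\<forall>x\<in>carr (Uv v). \<beta> x = \<alpha> x))))"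
proof -
  interpret mv v using assms by unfold_locales
  show ?thesis
  proof (intro conjI allI impI phiv_covers)
    fix V :: "'u stm" and iV psi assume c: "covers V iV psi v"
    interpret W: mvV v V iV psi using assms c by unfold_locales
    show "\<exists>\<alpha>. semiring_hom (Uv v) V \<alpha> \<and> over_M (iotav v) iV \<alpha> \<and> (\<forall>a. psi a = \<alpha> (phiv v a)) \<and>
          (\<forall>\<beta>. semiring_hom (Uv v) V \<beta> \<and> over_M (iotav v) iV \<beta> \<and> (\<forall>a. psi a = \<beta> (phiv v a))
                \<longrightarrow> (\<forall>x\<in>carr (Uv v). \<beta> x = \<alpha> x))"
      using W.alpha_hom W.alpha_over W.alpha_psi W.alpha_unique by blast
  qed
qed

end
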